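(* Let $\Omega$ be a finite set, $(H_i\mid i\in\Omega)$ finite abelian groups with $|H_i|\geqslant2$ for all $i$, $\mathbf{H}=\prod_{i\in\Omega}H_i$, $\mathbf{P}=(\Omega,\preccurlyeq_{\mathbf{P}})$ a poset, and $\Lambda$ the dual partition of $\mathcal{Q}(\mathbf{H},\mathbf{P})$. Let $\alpha,\gamma\in\hat{\mathbf{H}}$ lie in the same block of $\Lambda$, and let $D=\langle\mathrm{supp}(\alpha)\rangle_{\overline{\mathbf{P}}}$, $B=\langle\mathrm{supp}(\gamma)\rangle_{\overline{\mathbf{P}}}$. Then $|D|-|\min_{\mathbf{P}}(D)|=|B|-|\min_{\mathbf{P}}(B)|$.
   Context: $\hat{\mathbf{H}}$ is the character group of $\mathbf{H}$, identified with $\prod_i\hat{H_i}$ via $\alpha(\beta)=\prod_i\alpha_{(i)}(\beta_{(i)})$; $\mathrm{supp}$ of a codeword is the set of coordinates where it is not the identity. $\min_{\mathbf{P}}(B)$ is the set of minimal elements of $B$ in $\mathbf{P}$. For a poset $\mathbf{Q}$ on $\Omega$, $\langle B\rangle_{\mathbf{Q}}$ is the down-closure of $B$ and $\mathrm{wt}_{\mathbf{Q}}(\beta)=|\langle\mathrm{supp}(\beta)\rangle_{\mathbf{Q}}|$; $\overline{\mathbf{P}}$ is the dual poset. $\mathcal{Q}(\mathbf{H},\mathbf{P})$ is the partition of $\mathbf{H}$ into classes of equal $\mathbf{P}$-weight, and $\Lambda$ is the partition of $\hat{\mathbf{H}}$ with $\chi\sim\psi$ iff $\sum_{b\in B}\chi(b)=\sum_{b\in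 B}\psi(b)$ for every block $B$ of $\mathcal{Q}(\mathbf{H},\mathbf{P})$. *)

theory Defs
  imports "HOL-Algebra.Group" Complex_Main
begin

definition characters :: "('a, 'b) monoid_scheme \<Rightarrow> ('a \<Rightarrow> complex) set" where
  "characters G = {\<chi>. \<chi> \<in> carrier G \<rightarrow>\<^sub>E UNIV
      \<and> (\<forall>x\<in>carrier G. cmod (\<chi> x) = 1)
      \<and> (\<forall>x\<in>carrier G. \<forall>y\<in>carrier G. \<chi> (x \<otimes>\<^bsub>G\<^esub> y) = \<chi> x * \<chi> y)}"

definition trivial_char :: "('a, 'b) monoid_scheme \<Rightarrow> ('a \<Rightarrow> complex) \<Rightarrow> bool" where
  "trivial_char G \<chi> \<longleftrightarrow> (\<forall>x\<in>carrier G. \<chi> x = 1)"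

definition prod_carrier :: "'i set \<Rightarrow> ('i \<Rightarrow> ('a, 'b) monoid_scheme) \<Rightarrow> ('i \<Rightarrow> 'a) set" where
  "prod_carrier \<Omega> H = (\<Pi>\<^sub>E i\<in>\<Omega>. carrier (H i))"

(* Characters of the product group, identified with the product of the character groups *)
definition prod_characters :: "'i set \<Rightarrow> ('i \<Rightarrow> ('a, 'b) monoid_scheme) \<Rightarrow> ('i \<Rightarrow> 'a \<Rightarrow> complex) set" where
  "prod_characters \<Omega> H = (\<Pi>\<^sub>E i\<in>\<Omega>. characters (H i))"

definition char_eval :: "'i set \<Rightarrow> ('i \<Rightarrow> 'a \<Rightarrow> complex) \<Rightarrow> ('i \<Rightarrow> 'a) \<Rightarrow> complex" where
  "char_eval \<Omega> \<alpha> \<beta> = (\<Prod>i\<in>\<Omega>. \<alpha> i (\<beta> i))"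

definition supp_word :: "'i set \<Rightarrow> ('i \<Rightarrow> ('a, 'b) monoid_scheme) \<Rightarrow> ('i \<Rightarrow> 'a) \<Rightarrow> 'i set" where
  "supp_word \<Omega> H \<beta> = {i\<in>\<Omega>. \<beta> i \<noteq> \<one>\<^bsub>H i\<^esub>}"

definition supp_char :: "'i set \<Rightarrow> ('i \<Rightarrow> ('a, 'b) monoid_scheme) \<Rightarrow> ('i \<Rightarrow> 'a \<Rightarrow> complex) \<Rightarrow> 'i set" where
  "supp_char \<Omega> H \<alpha> = {i\<in>\<Omega>. \<not> trivial_char (H i) (\<alpha> i)}"

(* down-closure <B>_Q in the poset Q on \<Omega> (Q as a set of pairs (x,y) meaning x \<le>_Q y) *)
definition down_closure :: "'i set \<Rightarrow> 'i rel \<Rightarrow> 'i set \<Rightarrow> 'i set" where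
  "down_closure \<Omega> Q B = {j\<in>\<Omega>. \<exists>b\<in>B. (j, b) \<in> Q}"

definition min_elems :: "'i rel \<Rightarrow> 'i set \<Rightarrow> 'i set" where
  "min_elems P B = {x\<in>B. \<not> (\<exists>y\<in>B. (y, x) \<in> P \<and> y \<noteq> x)}"

definition P_weight :: "'i set \<Rightarrow> ('i \<Rightarrow> ('a, 'b) monoid_scheme) \<Rightarrow> 'i rel \<Rightarrow> ('i \<Rightarrow> 'a) \<Rightarrow> nat" where
  "P_weight \<Omega> H P \<beta> = card (down_closure \<Omega> P (supp_word \<Omega> H \<beta>))"

definition weight_partition :: "'i set \<Rightarrow> ('i \<Rightarrow> ('a, 'b) monoid_scheme) \<Rightarrow> 'i rel \<Rightarrow> ('i \<Rightarrow> 'a) set set" where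
  "weight_partition \<Omega> H P =
     {{\<beta>\<in>prod_carrier \<Omega> H. P_weight \<Omega> H P \<beta> = P_weight \<Omega> H P \<beta>0} | \<beta>0. \<beta>0 \<in> prod_carrier \<Omega> H}"

definition dual_partition_rel :: "'i set \<Rightarrow> ('i \<Rightarrow> ('a, 'b) monoid_scheme) \<Rightarrow> 'i rel
     \<Rightarrow> ('i \<Rightarrow> 'a \<Rightarrow> complex) \<Rightarrow> ('i \<Rightarrow> 'a \<Rightarrow> complex) \<Rightarrow> bool" where
  "dual_partition_rel \<Omega> H P \<chi> \<psi> \<longleftrightarrow>
     \<chi> \<in> prod_characters \<Omega> H \<and> \<psi> \<in> prod_characters \<Omega> H \<and>
     (\<forall>Bl\<in>weight_partition \<Omega> H P.
        (\<Sum>b\<in>Bl. char_eval \<Omega> \<chi> b) = (\<Sum>b\<in>Bl. char_eval \<Omega> \<psi> b))"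

end

theory Submission
  imports Defs "HOL-Library.FuncSet"
begin

lemma char_one:
  fixes G (structure)
  assumes "group G" "\<chi> \<in> characters G"
  shows "\<chi> \<one>\<^bsub>G\<^esub> = 1"
proof -
  interpret group G by fact
  have hom: "\<And>x y. x \<in> carrier G \<Longrightarrow> y \<in> carrier G \<Longrightarrow> \<chi> (x \<otimes> y) = \<chi> x * \<chi> y"
    using assms(2) unfolding characters_def by auto
  have "\<chi> \<one> = \<chi> (\<one> \<otimes> \<one>)" by simp
  also have "\<dots> = \<chi> \<one> * \<chi> \<one>" by (rule hom) simp_all
  finally have "\<chi> \<one> = \<chi> \<one> * \<chi> \<one>" .
  moreover have "cmod (\<chi> \<one>) = 1" using assms(2) unfolding characters_def by auto
  hence "\<chi> \<one> \<noteq> 0" by auto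
  ultimately show ?thesis by (metis mult_cancel_left1)
qed

lemma char_sum_zero:
  fixes G (structure)
  assumes "group G" "\<chi> \<in> characters G" "finite (carrier G)" "\<not> trivial_char G \<chi>"
  shows "(\<Sum>h\<in>carrier G. \<chi> h) = 0"
proof -
  interpret group G by fact
  obtain g where g: "g \<in> carrier G" "\<chi> g \<noteq> 1" using assms(4) unfolding trivial_char_def by auto
  have hom: "\<And>x y. x \<in> carrier G \<Longrightarrow> y \<in> carrier G \<Longrightarrow> \<chi> (x \<otimes> y) = \<chi> x * \<chi> y"
    using assms(2) unfolding characters_def by auto
  have "(\<Sum>h\<in>carrier G. \<chi> (h \<otimes> g)) = (\<Sum>h\<in>carrier G. \<chi> h)"
    by (rule sum.reindex_bij_witness[where i="\<lambda>h. h \<otimes> inv g" and j="\<lambda>h. h \<otimes> g"])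
       (simp_all add: g m_assoc)
  moreover have "(\<Sum>h\<in>carrier G. \<chi> (h \<otimes> g)) = \<chi> g * (\<Sum>h\<in>carrier G. \<chi> h)"
    by (simp add: sum_distrib_left hom g mult.commute)
  ultimately have "(1 - \<chi> g) * (\<Sum>h\<in>carrier G. \<chi> h) = 0" by (simp add: algebra_simps)
  thus ?thesis using g by simp
qed

locale setting =
  fixes \<Omega> :: "'i set" and H :: "'i \<Rightarrow> 'a monoid" and P :: "'i rel"
  assumes fin: "finite \<Omega>"
    and grp: "\<And>i. i \<in> \<Omega> \<Longrightarrow> comm_group (H i)"
    and finH: "\<And>i. i \<in> \<Omega> \<Longrightarrow> finite (carrier (H i))"
    and card2: "\<And>i. i \<in> \<Omega> \<Longrightarrow> card (carrier (H i)) \<ge> 2"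
    and Psub: "P \<subseteq> \<Omega> \<times> \<Omega>" and po: "partial_order_on \<Omega> P"
begin

lemma Prefl: "i \<in> \<Omega> \<Longrightarrow> (i, i) \<in> P"
  using po unfolding partial_order_on_def preorder_on_def refl_on_def by auto
lemma Ptrans: "(i, j) \<in> P \<Longrightarrow> (j, k) \<in> P \<Longrightarrow> (i, k) \<in> P"
  using po unfolding partial_order_on_def preorder_on_def trans_def by blast
lemma Pantisym: "(i, j) \<in> P \<Longrightarrow> (j, i) \<in> P \<Longrightarrow> i = j"
  using po unfolding partial_order_on_def antisym_def by blast
lemma inO: "(i, j) \<in> P \<Longrightarrow> i \<in> \<Omega> \<and> j \<in> \<Omega>"
  using Psub by auto

definition "J \<beta> = down_closure \<Omega> P (supp_word \<Omega> H \<beta>)"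
abbreviation "PC \<equiv> prod_carrier \<Omega> H"

lemma J_sub: "J \<beta> \<subseteq> \<Omega>" unfolding J_def down_closure_def by auto

lemma J_down: "x \<in> J \<beta> \<Longrightarrow> (y, x) \<in> P \<Longrightarrow> y \<in> J \<beta>"
  unfolding J_def down_closure_def using Ptrans inO by blast

lemma supp_J: "supp_word \<Omega> H \<beta> \<subseteq> J \<beta>"
  unfolding J_def down_closure_def supp_word_def using Prefl by auto

definition "sh x g \<beta> = \<beta>(x := \<beta> x \<otimes>\<^bsub>H x\<^esub> g)"

lemma sh_props:
  assumes "\<beta> \<in> PC" "J \<beta> = I" "x \<in> I" "y \<in> I" "(x, y) \<in> P" "y \<noteq> x" "g \<in> carrier (H x)"
  shows "sh x g \<beta> \<in> PC \<and> J (sh x g \<beta>) = I"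
proof -
  have xO: "x \<in> \<Omega>" using inO assms(5) by auto
  interpret comm_group "H x" using grp xO by auto
  have bx: "\<beta> x \<in> carrier (H x)" using assms(1) xO unfolding prod_carrier_def by auto
  have pc: "sh x g \<beta> \<in> PC" using assms(1) xO bx assms(7) unfolding prod_carrier_def sh_def
    by (auto simp: PiE_iff extensional_def)
  have s1: "supp_word \<Omega> H (sh x g \<beta>) \<subseteq> supp_word \<Omega> H \<beta> \<union> {x}"
    unfolding supp_word_def sh_def by auto
  have s2: "supp_word \<Omega> H \<beta> - {x} \<subseteq> supp_word \<Omega> H (sh x g \<beta>)"
    unfolding supp_word_def sh_def by auto
  have "J (sh x g \<beta>) \<subseteq> I"
  proof
    fix j assume "j \<in> J (sh x g \<beta>)"
    then obtain b where b: "j \<in> \<Omega>" "b \<in> supp_word \<Omega> H (sh x g \<beta>)" "(j, b) \<in> P"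
      unfolding J_def down_closure_def by auto
    show "j \<in> I"
    proof (cases "b = x")
      case True thus ?thesis using J_down assms b by blast
    next
      case False
      hence "b \<in> supp_word \<Omega> H \<beta>" using s1 b by auto
      thus ?thesis using b assms(2) unfolding J_def down_closure_def by auto
    qed
  qed
  moreover have "I \<subseteq> J (sh x g \<beta>)"
  proof
    fix j assume "j \<in> I"
    then obtain b where b: "j \<in> \<Omega>" "b \<in> supp_word \<Omega> H \<beta>" "(j, b) \<in> P"
      using assms(2) unfolding J_def down_closure_def by auto
    show "j \<in> J (sh x g \<beta>)"
    proof (cases "b = x")
      case False
      thus ?thesis using b s2 unfolding J_def down_closure_def by auto
    next
      case True
      obtain b' where b': "b' \<in> supp_word \<Omega> H \<beta>" "(y, b') \<in> P"
        using assms(2,4) unfolding J_def down_closure_def by auto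
      have "b' \<noteq> x" using Pantisym assms(5,6) b' by auto
      hence "b' \<in> supp_word \<Omega> H (sh x g \<beta>)" using s2 b' by auto
      moreover have "(j, b') \<in> P" using Ptrans b True assms(5) b' by blast
      ultimately show ?thesis using b unfolding J_def down_closure_def by auto
    qed
  qed
  ultimately show ?thesis using pc by auto
qed

lemma sh_inv:
  assumes "\<beta> \<in> PC" "x \<in> \<Omega>" "g \<in> carrier (H x)"
  shows "sh x (inv\<^bsub>H x\<^esub> g) (sh x g \<beta>) = \<beta>"
proof -
  interpret comm_group "H x" using grp assms(2) by auto
  have bx: "\<beta> x \<in> carrier (H x)" using assms(1,2) unfolding prod_carrier_def by auto
  show ?thesis unfolding sh_def using bx assms(3) by (auto simp: m_assoc)
qed

lemma shift_zero:
  assumes "\<alpha> \<in> prod_characters \<Omega> H" "x \<in> I" "y \<in> I" "(x, y) \<in> P" "y \<noteq> x"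
    "\<not> trivial_char (H x) (\<alpha> x)"
  shows "(\<Sum>\<beta>\<in>{\<beta>\<in>PC. J \<beta> = I}. char_eval \<Omega> \<alpha> \<beta>) = 0"
proof -
  have xO: "x \<in> \<Omega>" using inO assms(4) by auto
  interpret comm_group "H x" using grp xO by auto
  have ax: "\<alpha> x \<in> characters (H x)" using assms(1) xO unfolding prod_characters_def by auto
  obtain g where g: "g \<in> carrier (H x)" "\<alpha> x g \<noteq> 1" using assms(6) unfolding trivial_char_def by auto
  have hom: "\<And>a b. a \<in> carrier (H x) \<Longrightarrow> b \<in> carrier (H x) \<Longrightarrow> \<alpha> x (a \<otimes>\<^bsub>H x\<^esub> b) = \<alpha> x a * \<alpha> x b"
    using ax unfolding characters_def by auto
  let ?S = "{\<beta>\<in>PC. J \<beta> = I}"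
  have ig: "inv\<^bsub>H x\<^esub> g \<in> carrier (H x)" using g by auto
  have "(\<Sum>\<beta>\<in>?S. char_eval \<Omega> \<alpha> (sh x g \<beta>)) = (\<Sum>\<beta>\<in>?S. char_eval \<Omega> \<alpha> \<beta>)"
  proof -
    have A: "\<And>b. b\<in>?S \<Longrightarrow> sh x g b \<in> ?S" using sh_props[OF _ _ assms(2-5) g(1)] by blast
    have B: "\<And>b. b\<in>?S \<Longrightarrow> sh x (inv\<^bsub>H x\<^esub> g) b \<in> ?S"
      using sh_props[OF _ _ assms(2-5) ig] by blast
    have C: "\<And>b. b\<in>?S \<Longrightarrow> sh x (inv\<^bsub>H x\<^esub> g) (sh x g b) = b"
      using sh_inv[OF _ xO g(1)] by blast
    have D: "\<And>b. b\<in>?S \<Longrightarrow> sh x g (sh x (inv\<^bsub>H x\<^esub> g) b) = b"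
      using sh_inv[OF _ xO ig] inv_inv[OF g(1)] by (metis (no_types, lifting) mem_Collect_eq)
    show ?thesis
      by (rule sum.reindex_bij_witness[where i="sh x (inv\<^bsub>H x\<^esub> g)" and j="sh x g"])
         (use A B C D in simp_all)
  qed
  moreover have "char_eval \<Omega> \<alpha> (sh x g \<beta>) = \<alpha> x g * char_eval \<Omega> \<alpha> \<beta>" if "\<beta> \<in> PC" for \<beta>
  proof -
    have bx: "\<beta> x \<in> carrier (H x)" using that xO unfolding prod_carrier_def by auto
    have "char_eval \<Omega> \<alpha> (sh x g \<beta>) = \<alpha> x (\<beta> x \<otimes>\<^bsub>H x\<^esub> g) * (\<Prod>i\<in>\<Omega>-{x}. \<alpha> i (\<beta> i))"
    proof -
      have "(\<Prod>i\<in>\<Omega>-{x}. \<alpha> i (sh x g \<beta> i)) = (\<Prod>i\<in>\<Omega>-{x}. \<alpha> i (\<beta> i))"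
        by (rule prod.cong) (auto simp: sh_def)
      thus ?thesis unfolding char_eval_def using prod.remove[OF fin xO, of "\<lambda>i. \<alpha> i (sh x g \<beta> i)"]
        by (simp add: sh_def)
    qed
    also have "\<dots> = \<alpha> x g * (\<alpha> x (\<beta> x) * (\<Prod>i\<in>\<Omega>-{x}. \<alpha> i (\<beta> i)))"
      using hom[OF bx g(1)] by simp
    also have "\<dots> = \<alpha> x g * char_eval \<Omega> \<alpha> \<beta>"
      unfolding char_eval_def using prod.remove[OF fin xO, of "\<lambda>i. \<alpha> i (\<beta> i)"] by simp
    finally show ?thesis .
  qed
  ultimately have "\<alpha> x g * (\<Sum>\<beta>\<in>?S. char_eval \<Omega> \<alpha> \<beta>) = (\<Sum>\<beta>\<in>?S. char_eval \<Omega> \<alpha> \<beta>)"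
    by (simp add: sum_distrib_left)
  hence "(1 - \<alpha> x g) * (\<Sum>\<beta>\<in>?S. char_eval \<Omega> \<alpha> \<beta>) = 0" by (simp add: algebra_simps)
  thus ?thesis using g by simp
qed


definition "D \<alpha> = down_closure \<Omega> (P\<inverse>) (supp_char \<Omega> H \<alpha>)"
definition "M \<alpha> = min_elems P (D \<alpha>)"
definition "I0 \<alpha> = (\<Omega> - D \<alpha>) \<union> M \<alpha>"

lemma D_iff: "j \<in> D \<alpha> \<longleftrightarrow> j \<in> \<Omega> \<and> (\<exists>s\<in>supp_char \<Omega> H \<alpha>. (s, j) \<in> P)"
  unfolding D_def down_closure_def by auto
lemma M_iff: "m \<in> M \<alpha> \<longleftrightarrow> m \<in> D \<alpha> \<and> (\<forall>y\<in>D \<alpha>. (y, m) \<in> P \<longrightarrow> y = m)"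
  unfolding M_def min_elems_def by auto
lemma supp_char_sub: "supp_char \<Omega> H \<alpha> \<subseteq> \<Omega>" unfolding supp_char_def by auto
lemma supp_D: "supp_char \<Omega> H \<alpha> \<subseteq> D \<alpha>" using D_iff Prefl supp_char_sub by blast
lemma D_sub: "D \<alpha> \<subseteq> \<Omega>" using D_iff by blast
lemma M_sub: "M \<alpha> \<subseteq> D \<alpha>" using M_iff by blast
lemma D_up: "j \<in> D \<alpha> \<Longrightarrow> (j, k) \<in> P \<Longrightarrow> k \<in> D \<alpha>" using D_iff Ptrans inO by meson
lemma M_supp: "M \<alpha> \<subseteq> supp_char \<Omega> H \<alpha>"
proof
  fix m assume m: "m \<in> M \<alpha>"
  then obtain s where s: "s \<in> supp_char \<Omega> H \<alpha>" "(s, m) \<in> P" using M_iff D_iff by blast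
  have "s \<in> D \<alpha>" using s supp_D by blast
  hence "s = m" using m s M_iff by blast
  thus "m \<in> supp_char \<Omega> H \<alpha>" using s by simp
qed
lemma I0_sub: "I0 \<alpha> \<subseteq> \<Omega>" unfolding I0_def using M_sub D_sub by blast
lemma I0_down: "k \<in> I0 \<alpha> \<Longrightarrow> (j, k) \<in> P \<Longrightarrow> j \<in> I0 \<alpha>"
proof -
  assume k: "k \<in> I0 \<alpha>" and jk: "(j, k) \<in> P"
  have jO: "j \<in> \<Omega>" using inO jk by auto
  show ?thesis
  proof (cases "j \<in> D \<alpha>")
    case False thus ?thesis using jO unfolding I0_def by auto
  next
    case True
    hence "k \<in> D \<alpha>" using D_up jk by blast
    hence "k \<in> M \<alpha>" using k unfolding I0_def by auto
    hence "j = k" using M_iff True jk by blast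
    thus ?thesis using k by simp
  qed
qed
lemma M_max: "m \<in> M \<alpha> \<Longrightarrow> k \<in> I0 \<alpha> \<Longrightarrow> (m, k) \<in> P \<Longrightarrow> k = m"
proof -
  assume m: "m \<in> M \<alpha>" and k: "k \<in> I0 \<alpha>" and mk: "(m, k) \<in> P"
  have "k \<in> D \<alpha>" using D_up mk m M_iff by blast
  hence "k \<in> M \<alpha>" using k unfolding I0_def by auto
  thus "k = m" using M_iff m mk by blast
qed

definition "good \<alpha> I \<longleftrightarrow> (\<forall>x\<in>I. \<forall>y\<in>I. (x, y) \<in> P \<and> y \<noteq> x \<longrightarrow> trivial_char (H x) (\<alpha> x))"

lemma good_subset:
  assumes "good \<alpha> (J \<beta>)" shows "J \<beta> \<subseteq> I0 \<alpha>"
proof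
  fix x assume x: "x \<in> J \<beta>"
  have claim: "z \<in> supp_char \<Omega> H \<alpha>" if z: "z \<in> D \<alpha>" "z \<in> J \<beta>" for z
  proof -
    obtain s where s: "s \<in> supp_char \<Omega> H \<alpha>" "(s, z) \<in> P" using z D_iff by blast
    have sJ: "s \<in> J \<beta>" using J_down z s by blast
    have "s = z"
    proof (rule ccontr)
      assume "s \<noteq> z"
      hence "trivial_char (H s) (\<alpha> s)" using assms sJ z s unfolding good_def by blast
      thus False using s unfolding supp_char_def by auto
    qed
    thus ?thesis using s by simp
  qed
  show "x \<in> I0 \<alpha>"
  proof (cases "x \<in> D \<alpha>")
    case False thus ?thesis using x J_sub unfolding I0_def by auto
  next
    case True
    have "\<forall>y\<in>D \<alpha>. (y, x) \<in> P \<longrightarrow> y = x"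
    proof (intro ballI impI, rule ccontr)
      fix y assume y: "y \<in> D \<alpha>" "(y, x) \<in> P" "y \<noteq> x"
      have yJ: "y \<in> J \<beta>" using J_down x y by blast
      hence "trivial_char (H y) (\<alpha> y)" using assms x y unfolding good_def by blast
      moreover have "y \<in> supp_char \<Omega> H \<alpha>" using claim y yJ by blast
      ultimately show False unfolding supp_char_def by auto
    qed
    thus ?thesis using True M_iff unfolding I0_def by blast
  qed
qed

lemma max_exists:
  assumes "S \<subseteq> \<Omega>" "j \<in> S"
  shows "\<exists>m\<in>S. (j, m) \<in> P \<and> (\<forall>k\<in>S. (m, k) \<in> P \<longrightarrow> k = m)"
proof -
  define U where "U z = {k\<in>S. (z, k) \<in> P}" for z
  have fS: "finite S" using assms(1) fin finite_subset by blast
  have "(j, j) \<in> P" using Prefl assms by blast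
  then obtain m where m: "m \<in> S \<and> (j, m) \<in> P"
    and least: "\<forall>z. z \<in> S \<and> (j, z) \<in> P \<longrightarrow> card (U m) \<le> card (U z)"
    using ex_has_least_nat[of "\<lambda>z. z \<in> S \<and> (j, z) \<in> P" j "\<lambda>z. card (U z)"] assms(2) by blast
  have "\<forall>k\<in>S. (m, k) \<in> P \<longrightarrow> k = m"
  proof (intro ballI impI, rule ccontr)
    fix k assume k: "k \<in> S" "(m, k) \<in> P" "k \<noteq> m"
    have "U k \<subset> U m"
    proof
      show "U k \<subseteq> U m" unfolding U_def using Ptrans k by blast
      have "m \<in> U m" unfolding U_def using m Prefl assms(1) by blast
      moreover have "m \<notin> U k" unfolding U_def using Pantisym k by blast
      ultimately show "U k \<noteq> U m" by blast
    qed
    moreover have "finite (U m)" unfolding U_def using fS by simp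
    ultimately have "card (U k) < card (U m)" using psubset_card_mono by blast
    moreover have "(j, k) \<in> P" using Ptrans m k by blast
    ultimately show False using least k by force
  qed
  then show ?thesis using m by blast
qed

definition "Mx \<alpha> = {i\<in>I0 \<alpha>. \<forall>k\<in>I0 \<alpha>. (i, k) \<in> P \<longrightarrow> k = i}"
definition "A \<alpha> i = (if i \<notin> I0 \<alpha> then {\<one>\<^bsub>H i\<^esub>}
   else if i \<in> Mx \<alpha> then carrier (H i) - {\<one>\<^bsub>H i\<^esub>} else carrier (H i))"

lemma A_sub: "i \<in> \<Omega> \<Longrightarrow> A \<alpha> i \<subseteq> carrier (H i)"
proof -
  assume "i \<in> \<Omega>"
  then interpret comm_group "H i" using grp by auto
  show ?thesis unfolding A_def by auto
qed

lemma S_eq: "{\<beta>\<in>PC. J \<beta> = I0 \<alpha>} = PiE \<Omega> (A \<alpha>)"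
proof
  show "{\<beta>\<in>PC. J \<beta> = I0 \<alpha>} \<subseteq> PiE \<Omega> (A \<alpha>)"
  proof
    fix \<beta> assume "\<beta> \<in> {\<beta>\<in>PC. J \<beta> = I0 \<alpha>}"
    hence b: "\<beta> \<in> PC" "J \<beta> = I0 \<alpha>" by auto
    have "\<beta> i \<in> A \<alpha> i" if i: "i \<in> \<Omega>" for i
    proof -
      have bi: "\<beta> i \<in> carrier (H i)" using b(1) i unfolding prod_carrier_def by auto
      show ?thesis
      proof (cases "i \<in> I0 \<alpha>")
        case False
        hence "i \<notin> supp_word \<Omega> H \<beta>" using supp_J b(2) by blast
        hence "\<beta> i = \<one>\<^bsub>H i\<^esub>" using i unfolding supp_word_def by auto
        thus ?thesis using False unfolding A_def by auto
      next
        case True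
        show ?thesis
        proof (cases "i \<in> Mx \<alpha>")
          case False thus ?thesis using True bi unfolding A_def by auto
        next
          case iM: True
          obtain c where c: "c \<in> supp_word \<Omega> H \<beta>" "(i, c) \<in> P"
            using True b(2) unfolding J_def down_closure_def by auto
          have "c \<in> I0 \<alpha>" using c supp_J b(2) by blast
          hence "c = i" using iM c unfolding Mx_def by blast
          hence "\<beta> i \<noteq> \<one>\<^bsub>H i\<^esub>" using c unfolding supp_word_def by auto
          thus ?thesis using True iM bi unfolding A_def by auto
        qed
      qed
    qed
    moreover have "\<beta> \<in> extensional \<Omega>" using b(1) unfolding prod_carrier_def by (simp add: PiE_iff)
    ultimately show "\<beta> \<in> PiE \<Omega> (A \<alpha>)" by (simp add: PiE_iff)
  qed
next
  show "PiE \<Omega> (A \<alpha>) \<subseteq> {\<beta>\<in>PC. J \<beta> = I0 \<alpha>}"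
  proof
    fix \<beta> assume b: "\<beta> \<in> PiE \<Omega> (A \<alpha>)"
    have pc: "\<beta> \<in> PC" using b A_sub unfolding prod_carrier_def by (auto simp: PiE_iff)
    have s: "supp_word \<Omega> H \<beta> \<subseteq> I0 \<alpha>"
    proof
      fix c assume c: "c \<in> supp_word \<Omega> H \<beta>"
      hence "c \<in> \<Omega>" "\<beta> c \<noteq> \<one>\<^bsub>H c\<^esub>" unfolding supp_word_def by auto
      moreover have "\<beta> c \<in> A \<alpha> c" using b `c \<in> \<Omega>` by (auto simp: PiE_iff)
      ultimately show "c \<in> I0 \<alpha>" unfolding A_def by (auto split: if_splits)
    qed
    have "J \<beta> \<subseteq> I0 \<alpha>"
    proof
      fix j assume "j \<in> J \<beta>"
      then obtain c where "c \<in> supp_word \<Omega> H \<beta>" "(j, c) \<in> P" unfolding J_def down_closure_def by auto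
      thus "j \<in> I0 \<alpha>" using s I0_down by blast
    qed
    moreover have "I0 \<alpha> \<subseteq> J \<beta>"
    proof
      fix j assume j: "j \<in> I0 \<alpha>"
      obtain m where m: "m \<in> I0 \<alpha>" "(j, m) \<in> P" "\<forall>k\<in>I0 \<alpha>. (m, k) \<in> P \<longrightarrow> k = m"
        using max_exists[OF I0_sub j] by blast
      have mM: "m \<in> Mx \<alpha>" using m unfolding Mx_def by blast
      have mO: "m \<in> \<Omega>" using m I0_sub by blast
      have "\<beta> m \<in> A \<alpha> m" using b mO by (auto simp: PiE_iff)
      hence "\<beta> m \<noteq> \<one>\<^bsub>H m\<^esub>" using mM m unfolding A_def by auto
      hence "m \<in> supp_word \<Omega> H \<beta>" using mO unfolding supp_word_def by auto
      thus "j \<in> J \<beta>" using m j I0_sub unfolding J_def down_closure_def by blast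
    qed
    ultimately show "\<beta> \<in> {\<beta>\<in>PC. J \<beta> = I0 \<alpha>}" using pc by auto
  qed
qed


lemma char_of: "\<alpha> \<in> prod_characters \<Omega> H \<Longrightarrow> i \<in> \<Omega> \<Longrightarrow> \<alpha> i \<in> characters (H i)"
  unfolding prod_characters_def by auto

lemma S_nonzero:
  assumes a: "\<alpha> \<in> prod_characters \<Omega> H"
  shows "(\<Sum>\<beta>\<in>{\<beta>\<in>PC. J \<beta> = I0 \<alpha>}. char_eval \<Omega> \<alpha> \<beta>) \<noteq> 0"
proof -
  define f where "f i h = (if i \<in> M \<alpha> then \<alpha> i h else 1)" for i h
  have ce: "char_eval \<Omega> \<alpha> \<beta> = (\<Prod>i\<in>\<Omega>. f i (\<beta> i))" if b: "\<beta> \<in> PiE \<Omega> (A \<alpha>)" for \<beta>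
    unfolding char_eval_def
  proof (rule prod.cong[OF refl])
    fix i assume i: "i \<in> \<Omega>"
    interpret comm_group "H i" using grp i by auto
    have bi: "\<beta> i \<in> A \<alpha> i" using b i by (auto simp: PiE_iff)
    show "\<alpha> i (\<beta> i) = f i (\<beta> i)"
    proof (cases "i \<in> M \<alpha>")
      case True thus ?thesis unfolding f_def by simp
    next
      case False
      show ?thesis
      proof (cases "i \<in> I0 \<alpha>")
        case True
        hence "i \<notin> D \<alpha>" using False unfolding I0_def by auto
        hence "i \<notin> supp_char \<Omega> H \<alpha>" using supp_D by blast
        hence "trivial_char (H i) (\<alpha> i)" using i unfolding supp_char_def by auto
        moreover have "\<beta> i \<in> carrier (H i)" using bi A_sub i by blast
        ultimately show ?thesis using False unfolding f_def trivial_char_def by auto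
      next
        case nI: False
        hence "\<beta> i = \<one>\<^bsub>H i\<^esub>" using bi unfolding A_def by auto
        thus ?thesis using False char_one[OF _ char_of[OF a i]] unfolding f_def by auto
      qed
    qed
  qed
  have finA: "\<And>i. i \<in> \<Omega> \<Longrightarrow> finite (A \<alpha> i)" using A_sub finH finite_subset by blast
  have "(\<Sum>\<beta>\<in>{\<beta>\<in>PC. J \<beta> = I0 \<alpha>}. char_eval \<Omega> \<alpha> \<beta>) = (\<Sum>\<beta>\<in>PiE \<Omega> (A \<alpha>). \<Prod>i\<in>\<Omega>. f i (\<beta> i))"
    unfolding S_eq using ce by (rule sum.cong[OF refl])
  also have "\<dots> = (\<Prod>i\<in>\<Omega>. \<Sum>h\<in>A \<alpha> i. f i h)"
    by (rule prod_sum_PiE[symmetric]) (use fin finA in auto)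
  also have "\<dots> \<noteq> 0"
  proof -
    have "(\<Sum>h\<in>A \<alpha> i. f i h) \<noteq> 0" if i: "i \<in> \<Omega>" for i
    proof -
      interpret comm_group "H i" using grp i by auto
      show ?thesis
      proof (cases "i \<in> M \<alpha>")
        case True
        have iI: "i \<in> I0 \<alpha>" using True unfolding I0_def by auto
        hence "i \<in> Mx \<alpha>" using True M_max unfolding Mx_def by blast
        hence Ai: "A \<alpha> i = carrier (H i) - {\<one>\<^bsub>H i\<^esub>}" using iI unfolding A_def by auto
        have nt: "\<not> trivial_char (H i) (\<alpha> i)" using True M_supp unfolding supp_char_def by auto
        have "(\<Sum>h\<in>A \<alpha> i. f i h) = (\<Sum>h\<in>carrier (H i) - {\<one>\<^bsub>H i\<^esub>}. \<alpha> i h)"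
          unfolding Ai f_def using True by simp
        also have "\<dots> = (\<Sum>h\<in>carrier (H i). \<alpha> i h) - \<alpha> i \<one>\<^bsub>H i\<^esub>"
          using sum_diff1[OF finH[OF i], of "\<alpha> i" "\<one>\<^bsub>H i\<^esub>"] one_closed by simp
        also have "\<dots> = - 1"
          using char_sum_zero[OF _ char_of[OF a i] finH[OF i] nt] char_one[OF _ char_of[OF a i]]
          by (simp add: is_group)
        finally show ?thesis by simp
      next
        case False
        have "A \<alpha> i \<noteq> {}"
        proof -
          have "card (carrier (H i) - {\<one>\<^bsub>H i\<^esub>}) \<ge> 1"
            using card2[OF i] card_Diff_singleton[OF one_closed] by simp
          hence "carrier (H i) - {\<one>\<^bsub>H i\<^esub>} \<noteq> {}" by (metis card.empty not_one_le_zero)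
          thus ?thesis unfolding A_def by auto
        qed
        hence "card (A \<alpha> i) \<noteq> 0" using finA[OF i] by simp
        thus ?thesis unfolding f_def using False by simp
      qed
    qed
    thus ?thesis using fin by simp
  qed
  finally show ?thesis .
qed

definition "Bsum \<alpha> w = (\<Sum>\<beta>\<in>{\<beta>\<in>PC. card (J \<beta>) = w}. char_eval \<Omega> \<alpha> \<beta>)"

lemma finPC: "finite PC" unfolding prod_carrier_def using fin finH by (intro finite_PiE) auto

lemma finT: "finite {I. I \<subseteq> \<Omega> \<and> card I = w}"
  by (rule finite_subset[of _ "Pow \<Omega>"]) (use fin in auto)

lemma block_decomp:
  "Bsum \<alpha> w = (\<Sum>I\<in>{I. I \<subseteq> \<Omega> \<and> card I = w}. \<Sum>\<beta>\<in>{\<beta>\<in>PC. J \<beta> = I}. char_eval \<Omega> \<alpha> \<beta>)"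
proof -
  have "Bsum \<alpha> w = (\<Sum>I\<in>{I. I \<subseteq> \<Omega> \<and> card I = w}. \<Sum>\<beta>\<in>{\<beta>\<in>{\<beta>\<in>PC. card (J \<beta>) = w}. J \<beta> = I}. char_eval \<Omega> \<alpha> \<beta>)"
    unfolding Bsum_def
    by (rule sum.group[symmetric]) (use finPC finT J_sub in auto)
  also have "\<dots> = (\<Sum>I\<in>{I. I \<subseteq> \<Omega> \<and> card I = w}. \<Sum>\<beta>\<in>{\<beta>\<in>PC. J \<beta> = I}. char_eval \<Omega> \<alpha> \<beta>)"
    by (rule sum.cong[OF refl], rule sum.cong) auto
  finally show ?thesis .
qed

lemma inner_zero:
  assumes a: "\<alpha> \<in> prod_characters \<Omega> H" and nI: "\<not> I \<subseteq> I0 \<alpha>"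
  shows "(\<Sum>\<beta>\<in>{\<beta>\<in>PC. J \<beta> = I}. char_eval \<Omega> \<alpha> \<beta>) = 0"
proof (cases "{\<beta>\<in>PC. J \<beta> = I} = {}")
  case True thus ?thesis by (metis sum.empty)
next
  case False
  then obtain \<beta> where b: "\<beta> \<in> PC" "J \<beta> = I" by auto
  hence "\<not> good \<alpha> I" using good_subset nI by blast
  then obtain x y where "x \<in> I" "y \<in> I" "(x, y) \<in> P" "y \<noteq> x" "\<not> trivial_char (H x) (\<alpha> x)"
    unfolding good_def by blast
  thus ?thesis using shift_zero[OF a] by blast
qed

lemma above_zero:
  assumes a: "\<alpha> \<in> prod_characters \<Omega> H" and w: "w > card (I0 \<alpha>)"
  shows "Bsum \<alpha> w = 0"
  unfolding block_decomp
proof (rule sum.neutral, rule ballI)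
  fix I assume I: "I \<in> {I. I \<subseteq> \<Omega> \<and> card I = w}"
  have "\<not> I \<subseteq> I0 \<alpha>"
  proof
    assume "I \<subseteq> I0 \<alpha>"
    hence "card I \<le> card (I0 \<alpha>)" by (rule card_mono[OF finite_subset[OF I0_sub fin]])
    thus False using I w by simp
  qed
  thus "(\<Sum>\<beta>\<in>{\<beta>\<in>PC. J \<beta> = I}. char_eval \<Omega> \<alpha> \<beta>) = 0" using inner_zero[OF a] by blast
qed

lemma at_nonzero:
  assumes a: "\<alpha> \<in> prod_characters \<Omega> H"
  shows "Bsum \<alpha> (card (I0 \<alpha>)) \<noteq> 0"
proof -
  let ?T = "{I. I \<subseteq> \<Omega> \<and> card I = card (I0 \<alpha>)}"
  let ?g = "\<lambda>I. \<Sum>\<beta>\<in>{\<beta>\<in>PC. J \<beta> = I}. char_eval \<Omega> \<alpha> \<beta>"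
  have inT: "I0 \<alpha> \<in> ?T" using I0_sub by auto
  have "Bsum \<alpha> (card (I0 \<alpha>)) = ?g (I0 \<alpha>) + sum ?g (?T - {I0 \<alpha>})"
    unfolding block_decomp using sum.remove[OF finT inT] by simp
  also have "sum ?g (?T - {I0 \<alpha>}) = 0"
  proof (rule sum.neutral, rule ballI)
    fix I assume I: "I \<in> ?T - {I0 \<alpha>}"
    have "\<not> I \<subseteq> I0 \<alpha>"
    proof
      assume "I \<subseteq> I0 \<alpha>"
      moreover have "card I = card (I0 \<alpha>)" using I by simp
      ultimately have "I = I0 \<alpha>" using card_subset_eq[OF finite_subset[OF I0_sub fin]] by blast
      thus False using I by auto
    qed
    thus "?g I = 0" using inner_zero[OF a] by blast
  qed
  finally show ?thesis using S_nonzero[OF a] by simp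
qed

lemma le_lemma:
  assumes r: "dual_partition_rel \<Omega> H P \<alpha> \<gamma>"
  shows "card (I0 \<gamma>) \<le> card (I0 \<alpha>)"
proof (rule ccontr)
  assume "\<not> card (I0 \<gamma>) \<le> card (I0 \<alpha>)"
  hence lt: "card (I0 \<alpha>) < card (I0 \<gamma>)" by simp
  have a: "\<alpha> \<in> prod_characters \<Omega> H" and g: "\<gamma> \<in> prod_characters \<Omega> H"
    and eq: "\<forall>Bl\<in>weight_partition \<Omega> H P. (\<Sum>b\<in>Bl. char_eval \<Omega> \<alpha> b) = (\<Sum>b\<in>Bl. char_eval \<Omega> \<gamma> b)"
    using r unfolding dual_partition_rel_def by auto
  let ?w = "card (I0 \<gamma>)"
  have nz: "Bsum \<gamma> ?w \<noteq> 0" using at_nonzero[OF g] .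
  hence "{\<beta>\<in>PC. card (J \<beta>) = ?w} \<noteq> {}" unfolding Bsum_def by (metis sum.empty)
  then obtain \<beta>0 where b0: "\<beta>0 \<in> PC" "card (J \<beta>0) = ?w" by blast
  have "{\<beta>\<in>PC. card (J \<beta>) = ?w} = {\<beta>\<in>PC. card (J \<beta>) = card (J \<beta>0)}" using b0 by simp
  hence "{\<beta>\<in>PC. card (J \<beta>) = ?w} \<in> weight_partition \<Omega> H P"
    unfolding weight_partition_def P_weight_def J_def[symmetric]
    by (intro CollectI exI[of _ \<beta>0]) (simp add: b0(1))
  hence "Bsum \<alpha> ?w = Bsum \<gamma> ?w" using eq unfolding Bsum_def by blast
  moreover have "Bsum \<alpha> ?w = 0" using above_zero[OF a lt] .
  ultimately show False using nz by simp
qed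

lemma card_rel: "card (D \<alpha>) - card (M \<alpha>) = card \<Omega> - card (I0 \<alpha>)"
proof -
  have fD: "finite (D \<alpha>)" using D_sub fin finite_subset by blast
  have fM: "finite (M \<alpha>)" using M_sub fD finite_subset by blast
  have "card (I0 \<alpha>) = card (\<Omega> - D \<alpha>) + card (M \<alpha>)"
    unfolding I0_def using M_sub fin fM by (intro card_Un_disjoint) auto
  moreover have "card (\<Omega> - D \<alpha>) = card \<Omega> - card (D \<alpha>)" using card_Diff_subset[OF fD D_sub] .
  moreover have "card (M \<alpha>) \<le> card (D \<alpha>)" using card_mono[OF fD M_sub] .
  moreover have "card (D \<alpha>) \<le> card \<Omega>" using card_mono[OF fin D_sub] .
  ultimately show ?thesis by linarith
qed

end

theorem proposition2p3:
  fixes \<Omega> :: "'i set" and H :: "'i \<Rightarrow> 'a monoid" and P :: "'i rel"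
    and \<alpha> \<gamma> :: "'i \<Rightarrow> 'a \<Rightarrow> complex"
  assumes "finite \<Omega>"
    and "\<And>i. i \<in> \<Omega> \<Longrightarrow> comm_group (H i)"
    and "\<And>i. i \<in> \<Omega> \<Longrightarrow> finite (carrier (H i))"
    and "\<And>i. i \<in> \<Omega> \<Longrightarrow> card (carrier (H i)) \<ge> 2"
    and "P \<subseteq> \<Omega> \<times> \<Omega>" and "partial_order_on \<Omega> P"
    and "dual_partition_rel \<Omega> H P \<alpha> \<gamma>"
  shows "card (down_closure \<Omega> (P\<inverse>) (supp_char \<Omega> H \<alpha>))
           - card (min_elems P (down_closure \<Omega> (P\<inverse>) (supp_char \<Omega> H \<alpha>)))
       = card (down_closure \<Omega> (P\<inverse>) (supp_char \<Omega> H \<gamma>))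
           - card (min_elems P (down_closure \<Omega> (P\<inverse>) (supp_char \<Omega> H \<gamma>)))"
proof -
  interpret setting \<Omega> H P by (rule setting.intro[OF assms(1-6)])
  have r2: "dual_partition_rel \<Omega> H P \<gamma> \<alpha>" using assms(7) unfolding dual_partition_rel_def by auto
  have "card (I0 \<alpha>) = card (I0 \<gamma>)" using le_lemma[OF assms(7)] le_lemma[OF r2] by simp
  hence "card (D \<alpha>) - card (M \<alpha>) = card (D \<gamma>) - card (M \<gamma>)" using card_rel by simp
  thus ?thesis unfolding D_def M_def .
qed

end
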